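(* Consider the cyclically closed $2\times2\times M$ Ising-type model described in the context, with real couplings $J_1,\dots,J_5$, temperature $T>0$ and $\beta=1/(k_BT)$. Set $p_1=e^{\beta J_1}$, $q_1=e^{\beta J_2}$, $q_2=e^{2\beta J_3}$, $u_1=e^{\beta J_4}$, $v_1=e^{4\beta J_5}$ and $$\lambda_{\max}=4p_1^2u_1^{-2}v_1^{-1}+4u_1^2p_1^{-2}v_1^{-1}+4v_1q_2^{-2}+2q_2^2v_1q_1^{-4}+q_1^4q_2^2v_1p_1^{-4}u_1^{-4}+p_1^4q_1^4q_2^2u_1^4v_1 .$$ Then the free energy per site $f(T)=-k_BT\lim_{M\to\infty}\frac{1}{4M}\ln Z_M$ equals $-\frac{k_BT}{4}\ln\lambda_{\max}$, the internal energy per site $u(T)=-T^2\partial_T[f/T]$ equals $k_BT^2\partial_T[\frac14\ln\lambda_{\max}]$, and the heat capacity per site $C=\partial_T u$ equals $2k_BT\partial_T[\frac14\ln\lambda_{\max}]+k_BT^2\partial_T^2[\frac14\ln\lambda_{\max}]$.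
   Context: Sites $t_i^m$, $i\in\{0,1,2,3\}$ (indices mod 4), $m\in\{0,\dots,M-1\}$, cyclically closed ($t_i^M\equiv t_i^0$), spins $\sigma_i^m\in\{-1,1\}$. The cube energy is $$\mathcal H^m=-\sum_{r=0}^{3}\Big(J_1\sigma_r^m\sigma_r^{m+1}+J_2\sigma_r^m\sigma_{r+1}^m\sigma_r^{m+1}\sigma_{r+1}^{m+1}+J_3\sigma_r^m\sigma_{r+2}^m\sigma_r^{m+1}\sigma_{r+2}^{m+1}+J_4\prod_{i\ne r}\sigma_i^m\sigma_i^{m+1}+J_5\prod_{i=0}^3\sigma_i^m\sigma_i^{m+1}\Big),$$ $\mathcal H=\sum_{m=0}^{M-1}\mathcal H^m$, and $Z_M=\sum_{\sigma\in\{-1,1\}^{4M}}e^{-\beta\mathcal H(\sigma)}$. *)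

theory Defs
  imports "HOL-Analysis.Analysis"
begin

text \<open>Indices are read modulo 4 (in i) and modulo M (in m),
  which implements the cyclic closure t_i^M = t_i^0.\<close>

definition configs :: "nat \<Rightarrow> (nat \<times> nat \<Rightarrow> real) set" where
  "configs M = Pi\<^sub>E ({..<4::nat} \<times> {..<M}) (\<lambda>_. {-1, 1})"

definition spin :: "nat \<Rightarrow> (nat \<times> nat \<Rightarrow> real) \<Rightarrow> nat \<Rightarrow> nat \<Rightarrow> real" where
  "spin M \<sigma> i m = \<sigma> (i mod 4, m mod M)"

definition cube_energy ::
  "real \<Rightarrow> real \<Rightarrow> real \<Rightarrow> real \<Rightarrow> real \<Rightarrow> nat \<Rightarrow> (nat \<times> nat \<Rightarrow> real) \<Rightarrow> nat \<Rightarrow> real" where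
  "cube_energy J1 J2 J3 J4 J5 M \<sigma> m =
     - (\<Sum>r<4.
          J1 * spin M \<sigma> r m * spin M \<sigma> r (m+1)
        + J2 * spin M \<sigma> r m * spin M \<sigma> (r+1) m * spin M \<sigma> r (m+1) * spin M \<sigma> (r+1) (m+1)
        + J3 * spin M \<sigma> r m * spin M \<sigma> (r+2) m * spin M \<sigma> r (m+1) * spin M \<sigma> (r+2) (m+1)
        + J4 * (\<Prod>i\<in>{..<4} - {r}. spin M \<sigma> i m * spin M \<sigma> i (m+1))
        + J5 * (\<Prod>i<4. spin M \<sigma> i m * spin M \<sigma> i (m+1)))"

definition energy ::
  "real \<Rightarrow> real \<Rightarrow> real \<Rightarrow> real \<Rightarrow> real \<Rightarrow> nat \<Rightarrow> (nat \<times> nat \<Rightarrow> real) \<Rightarrow> real" where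
  "energy J1 J2 J3 J4 J5 M \<sigma> = (\<Sum>m<M. cube_energy J1 J2 J3 J4 J5 M \<sigma> m)"

definition partition ::
  "real \<Rightarrow> real \<Rightarrow> real \<Rightarrow> real \<Rightarrow> real \<Rightarrow> real \<Rightarrow> real \<Rightarrow> nat \<Rightarrow> real" where
  "partition kB J1 J2 J3 J4 J5 T M =
     (\<Sum>\<sigma>\<in>configs M. exp (- (1 / (kB * T)) * energy J1 J2 J3 J4 J5 M \<sigma>))"

definition lambda_max ::
  "real \<Rightarrow> real \<Rightarrow> real \<Rightarrow> real \<Rightarrow> real \<Rightarrow> real \<Rightarrow> real \<Rightarrow> real" where
  "lambda_max kB J1 J2 J3 J4 J5 T =
     (let \<beta> = 1 / (kB * T);
          p1 = exp (\<beta> * J1); q1 = exp (\<beta> * J2); q2 = exp (2 * \<beta> * J3);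
          u1 = exp (\<beta> * J4); v1 = exp (4 * \<beta> * J5)
      in 4 * p1^2 / (u1^2 * v1) + 4 * u1^2 / (p1^2 * v1) + 4 * v1 / q2^2
         + 2 * q2^2 * v1 / q1^4 + q1^4 * q2^2 * v1 / (p1^4 * u1^4)
         + p1^4 * q1^4 * q2^2 * u1^4 * v1)"

definition free_energy ::
  "real \<Rightarrow> real \<Rightarrow> real \<Rightarrow> real \<Rightarrow> real \<Rightarrow> real \<Rightarrow> real \<Rightarrow> real" where
  "free_energy kB J1 J2 J3 J4 J5 T =
     - kB * T * lim (\<lambda>M. ln (partition kB J1 J2 J3 J4 J5 T M) / (4 * real M))"

definition internal_energy ::
  "real \<Rightarrow> real \<Rightarrow> real \<Rightarrow> real \<Rightarrow> real \<Rightarrow> real \<Rightarrow> real \<Rightarrow> real" where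
  "internal_energy kB J1 J2 J3 J4 J5 T =
     - (T^2) * deriv (\<lambda>t. free_energy kB J1 J2 J3 J4 J5 t / t) T"

definition heat_capacity ::
  "real \<Rightarrow> real \<Rightarrow> real \<Rightarrow> real \<Rightarrow> real \<Rightarrow> real \<Rightarrow> real \<Rightarrow> real" where
  "heat_capacity kB J1 J2 J3 J4 J5 T = deriv (internal_energy kB J1 J2 J3 J4 J5) T"

end

theory Submission
  imports Defs
begin

definition cubeE :: "real \<Rightarrow> real \<Rightarrow> real \<Rightarrow> real \<Rightarrow> real \<Rightarrow> (nat \<Rightarrow> real) \<Rightarrow> (nat \<Rightarrow> real) \<Rightarrow> real" where
  "cubeE J1 J2 J3 J4 J5 x y = - (\<Sum>r<4.
          J1 * x (r mod 4) * y (r mod 4)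
        + J2 * x (r mod 4) * x ((r+1) mod 4) * y (r mod 4) * y ((r+1) mod 4)
        + J3 * x (r mod 4) * x ((r+2) mod 4) * y (r mod 4) * y ((r+2) mod 4)
        + J4 * (\<Prod>i\<in>{..<4} - {r}. x (i mod 4) * y (i mod 4))
        + J5 * (\<Prod>i<4. x (i mod 4) * y (i mod 4)))"

lemma sum4: "(\<Sum>r<4::nat. F r) = F 0 + F 1 + F 2 + (F 3::real)"
  by (simp add: eval_nat_numeral)
lemma prod4: "(\<Prod>r<4::nat. F r) = F 0 * F 1 * F 2 * (F 3::real)"
  by (simp add: eval_nat_numeral)
lemma prodD:
  "(\<Prod>i\<in>{..<4::nat} - {0}. F i) = F 1 * F 2 * (F 3::real)"
  "(\<Prod>i\<in>{..<4::nat} - {1}. F i) = F 0 * F 2 * (F 3::real)"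
  "(\<Prod>i\<in>{..<4::nat} - {2}. F i) = F 0 * F 1 * (F 3::real)"
  "(\<Prod>i\<in>{..<4::nat} - {3}. F i) = F 0 * F 1 * (F 2::real)"
proof -
  have a: "{..<4::nat} - {0} = {1,2,3}" "{..<4::nat} - {1} = {0,2,3}" "{..<4::nat} - {2} = {0,1,3}" "{..<4::nat} - {3} = {0,1,2}"
    by auto
  show "(\<Prod>i\<in>{..<4::nat} - {0}. F i) = F 1 * F 2 * (F 3::real)" unfolding a by (simp add: ac_simps)
  show "(\<Prod>i\<in>{..<4::nat} - {1}. F i) = F 0 * F 2 * (F 3::real)" unfolding a by (simp add: ac_simps)
  show "(\<Prod>i\<in>{..<4::nat} - {2}. F i) = F 0 * F 1 * (F 3::real)" unfolding a by (simp add: ac_simps)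
  show "(\<Prod>i\<in>{..<4::nat} - {3}. F i) = F 0 * F 1 * (F 2::real)" unfolding a by (simp add: ac_simps)
qed

lemma cubeE_closed:
  "cubeE J1 J2 J3 J4 J5 (\<lambda>_. 1) t = -(J1*(t 0+t 1+t 2+t 3) + J2*(t 0*t 1+t 1*t 2+t 2*t 3+t 3*t 0)
     + 2*J3*(t 0*t 2+t 1*t 3) + J4*(t 1*t 2*t 3+t 0*t 2*t 3+t 0*t 1*t 3+t 0*t 1*t 2) + 4*J5*(t 0*t 1*t 2*t 3))"
proof -
  have m: "(0::nat) mod 4 = 0" "(1::nat) mod 4 = 1" "(2::nat) mod 4 = 2" "(3::nat) mod 4 = 3"
    "(0+1::nat) mod 4 = 1" "(1+1::nat) mod 4 = 2" "(2+1::nat) mod 4 = 3" "(3+1::nat) mod 4 = 0"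
    "(0+2::nat) mod 4 = 2" "(1+2::nat) mod 4 = 3" "(2+2::nat) mod 4 = 0" "(3+2::nat) mod 4 = 1"
    by simp_all
  show ?thesis
    unfolding cubeE_def sum4 prod4 prodD m mult_1_left mult_1_right
    by algebra
qed


lemma sum_PiE_insert:
  assumes "x \<notin> S"
  shows "sum f (Pi\<^sub>E (insert x S) T) = (\<Sum>y\<in>T x. \<Sum>g\<in>Pi\<^sub>E S T. f (g(x := y)))"
  unfolding PiE_insert_eq
  by (subst sum.reindex[OF inj_combinator[OF assms]]) (simp add: sum.cartesian_product split_def)

lemma e2: "exp (x::real) ^ 2 = exp (2*x)" using exp_of_nat_mult[of 2 x] by simp
lemma e4: "exp (x::real) ^ 4 = exp (4*x)" using exp_of_nat_mult[of 4 x] by simp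

lemma rhs_eq:
  fixes b J1 J2 J3 J4 J5 :: real
  shows
     "(let p1 = exp (b * J1); q1 = exp (b * J2); q2 = exp (2 * b * J3);
          u1 = exp (b * J4); v1 = exp (4 * b * J5)
      in 4 * p1^2 / (u1^2 * v1) + 4 * u1^2 / (p1^2 * v1) + 4 * v1 / q2^2
         + 2 * q2^2 * v1 / q1^4 + q1^4 * q2^2 * v1 / (p1^4 * u1^4)
         + p1^4 * q1^4 * q2^2 * u1^4 * v1) = 
   4*exp(b*(2*J1-2*J4-4*J5)) + 4*exp(b*(2*J4-2*J1-4*J5)) + 4*exp(b*(4*J5-4*J3)) + 2*exp(b*(4*J3+4*J5-4*J2)) + exp(b*(4*J2+4*J3+4*J5-4*J1-4*J4)) + exp(b*(4*J1+4*J2+4*J3+4*J4+4*J5))"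
  unfolding Let_def e2 e4
  by (simp only: mult_exp_exp exp_diff[symmetric] times_divide_eq_right times_divide_eq_left) (simp add: algebra_simps exp_diff exp_add)

definition Lp :: "real \<Rightarrow> real \<Rightarrow> real \<Rightarrow> real \<Rightarrow> real \<Rightarrow> real \<Rightarrow> real \<Rightarrow> real \<Rightarrow> real \<Rightarrow> real" where
  "Lp J1 J2 J3 J4 J5 t0 t1 t2 t3 = J1*(t0+t1+t2+t3) + J2*(t0*t1+t1*t2+t2*t3+t3*t0)
     + 2*J3*(t0*t2+t1*t3) + J4*(t1*t2*t3+t0*t2*t3+t0*t1*t3+t0*t1*t2) + 4*J5*(t0*t1*t2*t3)"

lemma cubeE_Lp: "cubeE J1 J2 J3 J4 J5 (\<lambda>_. 1) t = - Lp J1 J2 J3 J4 J5 (t 0) (t 1) (t 2) (t 3)"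
  unfolding cubeE_closed Lp_def by simp

lemma Lp_vals:
  fixes J1 J2 J3 J4 J5 :: real
  shows
  "Lp J1 J2 J3 J4 J5 (-1) (-1) (-1) (-1) = 4*J2+4*J3+4*J5-4*J1-4*J4"
  "Lp J1 J2 J3 J4 J5 (-1) (-1) (-1) 1 = 2*J4-2*J1-4*J5"
  "Lp J1 J2 J3 J4 J5 (-1) (-1) 1 (-1) = 2*J4-2*J1-4*J5"
  "Lp J1 J2 J3 J4 J5 (-1) (-1) 1 1 = 4*J5-4*J3"
  "Lp J1 J2 J3 J4 J5 (-1) 1 (-1) (-1) = 2*J4-2*J1-4*J5"
  "Lp J1 J2 J3 J4 J5 (-1) 1 (-1) 1 = 4*J3+4*J5-4*J2"
  "Lp J1 J2 J3 J4 J5 (-1) 1 1 (-1) = 4*J5-4*J3"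
  "Lp J1 J2 J3 J4 J5 (-1) 1 1 1 = 2*J1-2*J4-4*J5"
  "Lp J1 J2 J3 J4 J5 1 (-1) (-1) (-1) = 2*J4-2*J1-4*J5"
  "Lp J1 J2 J3 J4 J5 1 (-1) (-1) 1 = 4*J5-4*J3"
  "Lp J1 J2 J3 J4 J5 1 (-1) 1 (-1) = 4*J3+4*J5-4*J2"
  "Lp J1 J2 J3 J4 J5 1 (-1) 1 1 = 2*J1-2*J4-4*J5"
  "Lp J1 J2 J3 J4 J5 1 1 (-1) (-1) = 4*J5-4*J3"
  "Lp J1 J2 J3 J4 J5 1 1 (-1) 1 = 2*J1-2*J4-4*J5"
  "Lp J1 J2 J3 J4 J5 1 1 1 (-1) = 2*J1-2*J4-4*J5"
  "Lp J1 J2 J3 J4 J5 1 1 1 1 = 4*J1+4*J2+4*J3+4*J4+4*J5"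
  by (simp_all add: Lp_def algebra_simps)

lemma sum_C4:
  "(\<Sum>t\<in>Pi\<^sub>E {..<4::nat} (\<lambda>_. {-1,1::real}). f t) =
     (\<Sum>a\<in>{-1,1}. \<Sum>b\<in>{-1,1}. \<Sum>c\<in>{-1,1}. \<Sum>d\<in>{-1,1}. f (((((\<lambda>_. undefined)(0:=d))(1:=c))(2:=b))(3:=a)))"
proof -
  have e: "{..<4::nat} = insert 3 (insert 2 (insert 1 (insert 0 {})))" by auto
  show ?thesis unfolding e
    by (simp only: sum_PiE_insert insert_iff empty_iff PiE_empty_domain sum.insert[OF finite.emptyI] sum.empty add_0_right simp_thms numeral_eq_iff semiring_norm one_neq_zero zero_neq_one zero_neq_numeral numeral_neq_zero numeral_eq_one_iff one_eq_numeral_iff)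
qed

lemma sum2: "(\<Sum>a\<in>{-1,1::real}. f a) = f (-1) + f 1" by simp

lemma lhs_eq:
  fixes b J1 J2 J3 J4 J5 :: real
  shows "(\<Sum>t\<in>Pi\<^sub>E {..<4::nat} (\<lambda>_. {-1,1::real}). exp (- b * cubeE J1 J2 J3 J4 J5 (\<lambda>_. 1) t)) =
   4*exp(b*(2*J1-2*J4-4*J5)) + 4*exp(b*(2*J4-2*J1-4*J5)) + 4*exp(b*(4*J5-4*J3)) + 2*exp(b*(4*J3+4*J5-4*J2)) + exp(b*(4*J2+4*J3+4*J5-4*J1-4*J4)) + exp(b*(4*J1+4*J2+4*J3+4*J4+4*J5))"
  unfolding sum_C4 cubeE_Lp sum2 mult_minus_left mult_minus_right minus_minus
  apply (simp only: fun_upd_apply numeral_eq_iff one_neq_zero zero_neq_one zero_neq_numeral numeral_neq_zero numeral_eq_one_iff one_eq_numeral_iff num.distinct num.inject simp_thms if_True if_False Lp_vals)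
  done


definition C4 :: "(nat \<Rightarrow> real) set" where "C4 = Pi\<^sub>E {..<4} (\<lambda>_. {-1,1})"

definition col :: "(nat \<times> nat \<Rightarrow> real) \<Rightarrow> nat \<Rightarrow> nat \<Rightarrow> real" where
  "col \<sigma> m = restrict (\<lambda>i. \<sigma> (i, m)) {..<4}"

lemma C4_finite: "finite C4" unfolding C4_def by (simp add: finite_PiE)
lemma C4_card: "card C4 = 16" unfolding C4_def by (simp add: card_PiE eval_nat_numeral)
lemma C4_ne: "C4 \<noteq> {}" using C4_card by auto

context
  fixes J1 J2 J3 J4 J5 :: real
begin

definition Wt :: "real \<Rightarrow> (nat \<Rightarrow> real) \<Rightarrow> (nat \<Rightarrow> real) \<Rightarrow> real" where
  "Wt b x y = exp (- b * cubeE J1 J2 J3 J4 J5 x y)"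

definition wf :: "real \<Rightarrow> (nat \<Rightarrow> real) \<Rightarrow> real" where
  "wf b t = exp (- b * cubeE J1 J2 J3 J4 J5 (\<lambda>_. 1) t)"

definition lam :: "real \<Rightarrow> real" where
  "lam b = (\<Sum>t\<in>C4. wf b t)"

lemma cubeE_prod: "cubeE J1 J2 J3 J4 J5 x y = cubeE J1 J2 J3 J4 J5 (\<lambda>_. 1) (restrict (\<lambda>i. x i * y i) {..<4})"
  unfolding cubeE_def by (simp add: ac_simps)

lemma Wt_wf: "Wt b x y = wf b (restrict (\<lambda>i. x i * y i) {..<4})"
  unfolding Wt_def wf_def using cubeE_prod by simp

lemma restrict_mult_C4:
  assumes "x \<in> C4" "y \<in> C4" shows "restrict (\<lambda>i. x i * y i) {..<4} \<in> C4"
proof -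
  have "x i * y i \<in> {-1,1}" if "i < 4" for i
  proof -
    have "x i \<in> {-1,1}" "y i \<in> {-1,1}" using assms that unfolding C4_def by (auto simp: PiE_iff)
    then show ?thesis by auto
  qed
  then show ?thesis unfolding C4_def by auto
qed

lemma row_sum:
  assumes x: "x \<in> C4"
  shows "(\<Sum>y\<in>C4. Wt b x y) = lam b"
  unfolding lam_def
proof (rule sum.reindex_bij_witness[where i="\<lambda>t. restrict (\<lambda>i. x i * t i) {..<4}" and j="\<lambda>t. restrict (\<lambda>i. x i * t i) {..<4}"])
  have sq: "x i * (x i * a) = a" if "i < 4" for i a
  proof -
    have "x i \<in> {-1,1}" using x that unfolding C4_def by (auto simp: PiE_iff)
    then show ?thesis by auto
  qed
  show "restrict (\<lambda>i. x i * restrict (\<lambda>i. x i * a i) {..<4} i) {..<4} = a" if "a \<in> C4" for a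
    using that sq unfolding C4_def by (auto simp: fun_eq_iff PiE_iff extensional_def)
  show "restrict (\<lambda>i. x i * restrict (\<lambda>i. x i * a i) {..<4} i) {..<4} = a" if "a \<in> C4" for a
    using that sq unfolding C4_def by (auto simp: fun_eq_iff PiE_iff extensional_def)
  show "restrict (\<lambda>i. x i * a i) {..<4} \<in> C4" if "a \<in> C4" for a
    using restrict_mult_C4[OF x that] .
  show "restrict (\<lambda>i. x i * a i) {..<4} \<in> C4" if "a \<in> C4" for a
    using restrict_mult_C4[OF x that] .
  show "wf b (restrict (\<lambda>i. x i * a i) {..<4}) = Wt b x a" if "a \<in> C4" for a
    by (simp add: Wt_wf)
qed

lemma wf_pos: "wf b t > 0" unfolding wf_def by simp
lemma Wt_pos: "Wt b x y > 0" unfolding Wt_def by simp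

lemma lam_pos: "lam b > 0"
  unfolding lam_def using C4_finite C4_ne by (intro sum_pos) (auto simp: wf_pos)

lemma Wt_le_lam: "x \<in> C4 \<Longrightarrow> y \<in> C4 \<Longrightarrow> Wt b x y \<le> lam b"
  using row_sum[of x b, symmetric] C4_finite
  by (auto intro!: member_le_sum simp: less_imp_le[OF Wt_pos])

definition wmin :: "real \<Rightarrow> real" where "wmin b = Min (wf b ` C4)"

lemma wmin_pos: "wmin b > 0"
  unfolding wmin_def using C4_finite C4_ne by (subst Min_gr_iff) (auto simp: wf_pos)

lemma wmin_le: "x \<in> C4 \<Longrightarrow> y \<in> C4 \<Longrightarrow> wmin b \<le> Wt b x y"
  unfolding wmin_def Wt_wf using C4_finite restrict_mult_C4 by (intro Min_le) auto

lemma lam_formula: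
  "lam b = (let p1 = exp (b * J1); q1 = exp (b * J2); q2 = exp (2 * b * J3);
          u1 = exp (b * J4); v1 = exp (4 * b * J5)
      in 4 * p1^2 / (u1^2 * v1) + 4 * u1^2 / (p1^2 * v1) + 4 * v1 / q2^2
         + 2 * q2^2 * v1 / q1^4 + q1^4 * q2^2 * v1 / (p1^4 * u1^4)
         + p1^4 * q1^4 * q2^2 * u1^4 * v1)"
  unfolding rhs_eq lam_def wf_def C4_def lhs_eq ..

lemma path_sum:
  "(\<Sum>c\<in>Pi\<^sub>E {..<Suc n} (\<lambda>_. C4). \<Prod>m<n. Wt b (c m) (c (Suc m))) = 16 * lam b ^ n"
proof (induction n)
  case 0
  then show ?case by (simp add: card_PiE C4_card)
next
  case (Suc n)
  have e: "{..<Suc (Suc n)} = insert (Suc n) {..<Suc n}" by auto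
  have "(\<Sum>c\<in>Pi\<^sub>E {..<Suc (Suc n)} (\<lambda>_. C4). \<Prod>m<Suc n. Wt b (c m) (c (Suc m)))
     = (\<Sum>y\<in>C4. \<Sum>g\<in>Pi\<^sub>E {..<Suc n} (\<lambda>_. C4). \<Prod>m<Suc n. Wt b ((g(Suc n := y)) m) ((g(Suc n := y)) (Suc m)))"
    unfolding e by (subst sum_PiE_insert) auto
  also have "\<dots> = (\<Sum>y\<in>C4. \<Sum>g\<in>Pi\<^sub>E {..<Suc n} (\<lambda>_. C4). (\<Prod>m<n. Wt b (g m) (g (Suc m))) * Wt b (g n) y)"
    by (intro sum.cong refl) (simp add: prod.lessThan_Suc)
  also have "\<dots> = (\<Sum>g\<in>Pi\<^sub>E {..<Suc n} (\<lambda>_. C4). (\<Prod>m<n. Wt b (g m) (g (Suc m))) * (\<Sum>y\<in>C4. Wt b (g n) y))"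
    by (subst sum.swap) (simp add: sum_distrib_left)
  also have "\<dots> = (\<Sum>g\<in>Pi\<^sub>E {..<Suc n} (\<lambda>_. C4). (\<Prod>m<n. Wt b (g m) (g (Suc m))) * lam b)"
    by (intro sum.cong refl) (auto simp: row_sum PiE_iff)
  also have "\<dots> = 16 * lam b ^ Suc n"
    using Suc by (simp add: sum_distrib_right[symmetric])
  finally show ?case .
qed

end


lemma cube_col:
  assumes "m < M"
  shows "cube_energy J1 J2 J3 J4 J5 M \<sigma> m = cubeE J1 J2 J3 J4 J5 (col \<sigma> m) (col \<sigma> ((m+1) mod M))"
  unfolding cube_energy_def cubeE_def spin_def col_def using assms by simp

lemma partition_cols:
  assumes M: "M > 0"
  shows "partition kB J1 J2 J3 J4 J5 T M =
    (\<Sum>c\<in>Pi\<^sub>E {..<M} (\<lambda>_. C4). \<Prod>m<M. Wt J1 J2 J3 J4 J5 (1/(kB*T)) (c m) (c ((m+1) mod M)))"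
  unfolding partition_def energy_def
proof (rule sum.reindex_bij_witness[where j="\<lambda>\<sigma>. restrict (col \<sigma>) {..<M}"
       and i="\<lambda>c. (\<lambda>(k,m). if k < 4 \<and> m < M then c m k else undefined)"])
  fix \<sigma> assume s: "\<sigma> \<in> configs M"
  then have ext: "\<sigma> (k, m) = undefined" if "\<not> (k < 4 \<and> m < M)" for k m
    using that unfolding configs_def by (auto simp: PiE_iff extensional_def)
  show "(\<lambda>(k, m). if k < 4 \<and> m < M then restrict (col \<sigma>) {..<M} m k else undefined) = \<sigma>"
    using ext by (auto simp: fun_eq_iff col_def)
  have "col \<sigma> m \<in> C4" if "m < M" for m
    using s that unfolding configs_def C4_def col_def by (auto simp: PiE_iff)
  then show "restrict (col \<sigma>) {..<M} \<in> Pi\<^sub>E {..<M} (\<lambda>_. C4)" by auto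
  have "(\<Prod>m<M. exp (- (1 / (kB * T)) * cube_energy J1 J2 J3 J4 J5 M \<sigma> m))
      = exp (- (1 / (kB * T)) * (\<Sum>m<M. cube_energy J1 J2 J3 J4 J5 M \<sigma> m))"
  proof -
    have "exp (- (1 / (kB * T)) * (\<Sum>m<M. cube_energy J1 J2 J3 J4 J5 M \<sigma> m))
        = exp (\<Sum>m<M. - (1 / (kB * T)) * cube_energy J1 J2 J3 J4 J5 M \<sigma> m)"
      by (simp only: sum_distrib_left)
    also have "\<dots> = (\<Prod>m<M. exp (- (1 / (kB * T)) * cube_energy J1 J2 J3 J4 J5 M \<sigma> m))"
      by (rule exp_sum) simp
    finally show ?thesis by simp
  qed
  moreover have "(\<Prod>m<M. Wt J1 J2 J3 J4 J5 (1 / (kB * T)) (restrict (col \<sigma>) {..<M} m) (restrict (col \<sigma>) {..<M} ((m + 1) mod M)))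
      = (\<Prod>m<M. exp (- (1 / (kB * T)) * cube_energy J1 J2 J3 J4 J5 M \<sigma> m))"
    using M by (intro prod.cong refl) (simp add: Wt_def cube_col)
  ultimately show "(\<Prod>m<M. Wt J1 J2 J3 J4 J5 (1 / (kB * T)) (restrict (col \<sigma>) {..<M} m) (restrict (col \<sigma>) {..<M} ((m + 1) mod M)))
      = exp (- (1 / (kB * T)) * (\<Sum>m<M. cube_energy J1 J2 J3 J4 J5 M \<sigma> m))" by simp
next
  fix c assume c: "c \<in> Pi\<^sub>E {..<M} (\<lambda>_. C4)"
  have cm: "c m \<in> C4" if "m < M" for m using c that by auto
  have cu: "c m = undefined" if "\<not> m < M" for m using c that by (auto simp: PiE_iff extensional_def)
  show "restrict (col (\<lambda>(k, m). if k < 4 \<and> m < M then c m k else undefined)) {..<M} = c"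
  proof (rule ext)
    fix m show "restrict (col (\<lambda>(k, m). if k < 4 \<and> m < M then c m k else undefined)) {..<M} m = c m"
    proof (cases "m < M")
      case True
      have "c m \<in> extensional {..<4}" using cm[OF True] unfolding C4_def by (auto simp: PiE_iff)
      then show ?thesis using True by (auto simp: col_def fun_eq_iff extensional_def)
    qed (simp add: cu)
  qed
  show "(\<lambda>(k, m). if k < 4 \<and> m < M then c m k else undefined) \<in> configs M"
    using cm unfolding configs_def C4_def by (auto simp: PiE_iff extensional_def)
qed


lemma Z_bounds:
  fixes kB T J1 J2 J3 J4 J5 :: real
  defines "b \<equiv> 1 / (kB * T)"
  shows "16 * wmin J1 J2 J3 J4 J5 b * lam J1 J2 J3 J4 J5 b ^ n \<le> partition kB J1 J2 J3 J4 J5 T (Suc n)"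
    and "partition kB J1 J2 J3 J4 J5 T (Suc n) \<le> 16 * lam J1 J2 J3 J4 J5 b ^ Suc n"
proof -
  let ?W = "Wt J1 J2 J3 J4 J5 b"
  let ?P = "\<lambda>c. \<Prod>m<n. ?W (c m) (c (Suc m))"
  have Z: "partition kB J1 J2 J3 J4 J5 T (Suc n) = (\<Sum>c\<in>Pi\<^sub>E {..<Suc n} (\<lambda>_. C4). ?P c * ?W (c n) (c 0))"
    unfolding partition_cols[OF zero_less_Suc] b_def[symmetric]
    by (intro sum.cong refl) (simp add: prod.lessThan_Suc)
  have Pnn: "?P c \<ge> 0" for c by (intro prod_nonneg) (simp add: less_imp_le[OF Wt_pos])
  have cC: "c n \<in> C4" "c 0 \<in> C4" if "c \<in> Pi\<^sub>E {..<Suc n} (\<lambda>_. C4)" for c using that by auto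
  have "(\<Sum>c\<in>Pi\<^sub>E {..<Suc n} (\<lambda>_. C4). ?P c * wmin J1 J2 J3 J4 J5 b) \<le> (\<Sum>c\<in>Pi\<^sub>E {..<Suc n} (\<lambda>_. C4). ?P c * ?W (c n) (c 0))"
    by (intro sum_mono mult_left_mono wmin_le Pnn cC)
  moreover have "(\<Sum>c\<in>Pi\<^sub>E {..<Suc n} (\<lambda>_. C4). ?P c * wmin J1 J2 J3 J4 J5 b) = 16 * wmin J1 J2 J3 J4 J5 b * lam J1 J2 J3 J4 J5 b ^ n"
    by (simp add: sum_distrib_right[symmetric] path_sum)
  ultimately show "16 * wmin J1 J2 J3 J4 J5 b * lam J1 J2 J3 J4 J5 b ^ n \<le> partition kB J1 J2 J3 J4 J5 T (Suc n)"
    using Z by simp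
  have "(\<Sum>c\<in>Pi\<^sub>E {..<Suc n} (\<lambda>_. C4). ?P c * ?W (c n) (c 0)) \<le> (\<Sum>c\<in>Pi\<^sub>E {..<Suc n} (\<lambda>_. C4). ?P c * lam J1 J2 J3 J4 J5 b)"
    by (intro sum_mono mult_left_mono Wt_le_lam Pnn cC)
  moreover have "(\<Sum>c\<in>Pi\<^sub>E {..<Suc n} (\<lambda>_. C4). ?P c * lam J1 J2 J3 J4 J5 b) = 16 * lam J1 J2 J3 J4 J5 b ^ Suc n"
    by (simp add: sum_distrib_right[symmetric] path_sum)
  ultimately show "partition kB J1 J2 J3 J4 J5 T (Suc n) \<le> 16 * lam J1 J2 J3 J4 J5 b ^ Suc n"
    using Z by simp
qed

lemma lin_lim: "(\<lambda>n. (A + real n * L) / (4 * real (Suc n))) \<longlonglongrightarrow> L / 4"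
proof -
  have eq: "(A + real n * L) / (4 * real (Suc n)) = L / 4 + (A - L) / 4 * inverse (real (Suc n))" for n
    by (simp add: field_simps)
  have "(\<lambda>n. L / 4 + (A - L) / 4 * inverse (real (Suc n))) \<longlonglongrightarrow> L / 4 + (A - L) / 4 * 0"
    by (intro tendsto_intros LIMSEQ_inverse_real_of_nat)
  then show ?thesis unfolding eq by simp
qed

lemma Z_limit:
  shows "(\<lambda>M. ln (partition kB J1 J2 J3 J4 J5 T M) / (4 * real M))
            \<longlonglongrightarrow> ln (lam J1 J2 J3 J4 J5 (1 / (kB * T))) / 4"
proof -
  define b where "b = 1 / (kB * T)"
  define L where "L = lam J1 J2 J3 J4 J5 b"
  define w where "w = wmin J1 J2 J3 J4 J5 b"
  let ?Z = "\<lambda>n. partition kB J1 J2 J3 J4 J5 T (Suc n)"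
  have Lp: "L > 0" unfolding L_def by (rule lam_pos)
  have wp: "w > 0" unfolding w_def by (rule wmin_pos)
  have lo: "16 * w * L ^ n \<le> ?Z n" and hi: "?Z n \<le> 16 * L ^ Suc n" for n
    unfolding L_def w_def b_def by (rule Z_bounds)+
  have Zp: "?Z n > 0" for n
  proof -
    have "0 < 16 * w * L ^ n" using wp Lp by simp
    then show ?thesis using lo[of n] by linarith
  qed
  have lnlo: "ln (16 * w) + real n * ln L \<le> ln (?Z n)" for n
  proof -
    have "ln (16 * w * L ^ n) \<le> ln (?Z n)" using lo[of n] wp Lp Zp[of n] by (subst ln_le_cancel_iff) auto
    moreover have "ln (16 * w * L ^ n) = ln (16 * w) + real n * ln L"
      using wp Lp by (simp add: ln_mult ln_realpow)
    ultimately show ?thesis by simp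
  qed
  have lnhi: "ln (?Z n) \<le> ln 16 + real n * ln L + ln L" for n
  proof -
    have "ln (?Z n) \<le> ln (16 * L ^ Suc n)" using hi[of n] Zp[of n] Lp by (subst ln_le_cancel_iff) auto
    moreover have "ln (16 * L ^ Suc n) = ln 16 + real n * ln L + ln L"
      using Lp by (simp add: ln_mult ln_realpow algebra_simps)
    ultimately show ?thesis by simp
  qed
  have "(\<lambda>n. ln (?Z n) / (4 * real (Suc n))) \<longlonglongrightarrow> ln L / 4"
  proof (rule tendsto_sandwich[OF _ _ lin_lim[of "ln (16 * w)" "ln L"] lin_lim[of "ln 16 + ln L" "ln L"]])
    show "\<forall>\<^sub>F n in sequentially. (ln (16 * w) + real n * ln L) / (4 * real (Suc n)) \<le> ln (?Z n) / (4 * real (Suc n))"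
      using lnlo by (intro always_eventually allI divide_right_mono) auto
    show "\<forall>\<^sub>F n in sequentially. ln (?Z n) / (4 * real (Suc n)) \<le> (ln 16 + ln L + real n * ln L) / (4 * real (Suc n))"
      using lnhi by (intro always_eventually allI divide_right_mono) (auto simp: algebra_simps)
  qed
  then have "(\<lambda>n. ln (partition kB J1 J2 J3 J4 J5 T (Suc n)) / (4 * real (Suc n))) \<longlonglongrightarrow> ln L / 4" .
  then show ?thesis unfolding L_def b_def by (rule LIMSEQ_imp_Suc)
qed


lemma exp_term_deriv:
  fixes k a t :: real
  assumes "k \<noteq> 0" "t \<noteq> 0"
  shows "((\<lambda>t. exp (- (1 / (k * t)) * a)) has_real_derivative exp (- (1 / (k * t)) * a) * (a / (k * t^2))) (at t)"
    and "((\<lambda>t. exp (- (1 / (k * t)) * a) * (a / (k * t^2))) has_real_derivative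
          exp (- (1 / (k * t)) * a) * ((a / (k * t^2))^2 - 2 * a / (k * t^3))) (at t)"
  using assms
  by (auto intro!: derivative_eq_intros simp: field_simps power2_eq_square power3_eq_cube)

lemma sum_exp_deriv:
  fixes k t :: real and a :: "'a \<Rightarrow> real"
  assumes "k \<noteq> 0" "t \<noteq> 0"
  shows "((\<lambda>t. \<Sum>s\<in>S. exp (- (1 / (k * t)) * a s)) has_real_derivative
          (\<Sum>s\<in>S. exp (- (1 / (k * t)) * a s) * (a s / (k * t^2)))) (at t)"
    and "((\<lambda>t. \<Sum>s\<in>S. exp (- (1 / (k * t)) * a s) * (a s / (k * t^2))) has_real_derivative
          (\<Sum>s\<in>S. exp (- (1 / (k * t)) * a s) * ((a s / (k * t^2))^2 - 2 * a s / (k * t^3)))) (at t)"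
  by (intro DERIV_sum exp_term_deriv assms)+

lemma log_derivs:
  fixes L L1 L2 :: "real \<Rightarrow> real"
  assumes dL: "\<And>t. t > 0 \<Longrightarrow> (L has_real_derivative L1 t) (at t)"
    and dL1: "\<And>t. t > 0 \<Longrightarrow> (L1 has_real_derivative L2 t) (at t)"
    and Lpos: "\<And>t. L t > 0" and T: "T > 0"
  defines "g \<equiv> \<lambda>t. ln (L t) / 4"
  shows "\<And>t. t > 0 \<Longrightarrow> (g has_real_derivative L1 t / (4 * L t)) (at t)"
    and "((\<lambda>t. L1 t / (4 * L t)) has_real_derivative (L2 T * L T - L1 T ^ 2) / (4 * L T ^ 2)) (at T)"
proof -
  show "(g has_real_derivative L1 t / (4 * L t)) (at t)" if "t > 0" for t
    unfolding g_def using dL[OF that] Lpos[of t]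
    by (auto intro!: derivative_eq_intros simp: field_simps)
  show "((\<lambda>t. L1 t / (4 * L t)) has_real_derivative (L2 T * L T - L1 T ^ 2) / (4 * L T ^ 2)) (at T)"
    using dL[OF T] dL1[OF T] Lpos[of T]
    by (auto intro!: derivative_eq_intros simp: field_simps power2_eq_square)
qed


theorem theorem4:
  fixes kB J1 J2 J3 J4 J5 T :: real
  assumes "kB > 0" and "T > 0"
  defines "g \<equiv> (\<lambda>t. ln (lambda_max kB J1 J2 J3 J4 J5 t) / 4)"
  shows "((\<lambda>M. ln (partition kB J1 J2 J3 J4 J5 T M) / (4 * real M))
            \<longlonglongrightarrow> ln (lambda_max kB J1 J2 J3 J4 J5 T) / 4)
    \<and> (free_energy kB J1 J2 J3 J4 J5 T = - (kB * T / 4) * ln (lambda_max kB J1 J2 J3 J4 J5 T))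
    \<and> (internal_energy kB J1 J2 J3 J4 J5 T = kB * T^2 * deriv g T)
    \<and> (heat_capacity kB J1 J2 J3 J4 J5 T
           = 2 * kB * T * deriv g T + kB * T^2 * deriv (deriv g) T)"
proof -
  note kB = assms(1) and TT = assms(2)
  define a where "a = (\<lambda>\<tau>. cubeE J1 J2 J3 J4 J5 (\<lambda>_. 1) \<tau>)"
  define L where "L = (\<lambda>t. lam J1 J2 J3 J4 J5 (1 / (kB * t)))"
  define L1 where "L1 = (\<lambda>t. \<Sum>s\<in>C4. exp (- (1 / (kB * t)) * a s) * (a s / (kB * t^2)))"
  define L2 where "L2 = (\<lambda>t. \<Sum>s\<in>C4. exp (- (1 / (kB * t)) * a s) * ((a s / (kB * t^2))^2 - 2 * a s / (kB * t^3)))"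
  define g1 where "g1 = (\<lambda>t. L1 t / (4 * L t))"
  define G2 where "G2 = (L2 T * L T - L1 T ^ 2) / (4 * L T ^ 2)"
  have Leq: "L = (\<lambda>t. \<Sum>s\<in>C4. exp (- (1 / (kB * t)) * a s))"
    unfolding L_def lam_def wf_def a_def by simp
  have lm: "lambda_max kB J1 J2 J3 J4 J5 t = L t" for t
    unfolding L_def lam_formula lambda_max_def Let_def by simp
  have gL: "g = (\<lambda>t. ln (L t) / 4)" unfolding g_def lm ..
  have dL: "(L has_real_derivative L1 t) (at t)" if "t > 0" for t
    unfolding Leq L1_def using kB that by (intro sum_exp_deriv(1)) auto
  have dL1: "(L1 has_real_derivative L2 t) (at t)" if "t > 0" for t
    unfolding L1_def L2_def using kB that by (intro sum_exp_deriv(2)) auto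
  have Lpos: "L t > 0" for t unfolding L_def by (rule lam_pos)
  have dg: "(g has_real_derivative g1 t) (at t)" if "t > 0" for t
    unfolding gL g1_def by (rule log_derivs(1)[OF dL dL1 Lpos TT that])
  have dg1: "(g1 has_real_derivative G2) (at T)"
    unfolding g1_def G2_def by (rule log_derivs(2)[OF dL dL1 Lpos TT])
  have derg: "deriv g t = g1 t" if "t > 0" for t by (rule DERIV_imp_deriv[OF dg[OF that]])
  have ev: "eventually (\<lambda>t. t > 0) (nhds T)"
    using eventually_nhds_in_open[of "{0<..}" T] TT by simp
  have derg2: "deriv (deriv g) T = G2"
  proof -
    have "deriv (deriv g) T = deriv g1 T"
      by (rule deriv_cong_ev[OF eventually_mono[OF ev] refl]) (simp add: derg)
    also have "\<dots> = G2" by (rule DERIV_imp_deriv[OF dg1])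
    finally show ?thesis .
  qed
  have lim: "(\<lambda>M. ln (partition kB J1 J2 J3 J4 J5 t M) / (4 * real M)) \<longlonglongrightarrow> ln (L t) / 4" for t
    unfolding L_def by (rule Z_limit)
  have fe: "free_energy kB J1 J2 J3 J4 J5 t = - (kB * t / 4) * ln (L t)" for t
    unfolding free_energy_def limI[OF lim] by simp
  have ie: "internal_energy kB J1 J2 J3 J4 J5 t = kB * t^2 * g1 t" if "t > 0" for t
  proof -
    have ev': "eventually (\<lambda>s. s > 0) (nhds t)"
      using eventually_nhds_in_open[of "{0<..}" t] that by simp
    have "deriv (\<lambda>s. free_energy kB J1 J2 J3 J4 J5 s / s) t = deriv (\<lambda>s. - kB * g s) t"
      by (rule deriv_cong_ev[OF eventually_mono[OF ev'] refl]) (simp add: fe gL)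
    also have "\<dots> = - kB * g1 t"
      by (rule DERIV_imp_deriv) (rule DERIV_cmult[OF dg[OF that]])
    finally show ?thesis unfolding internal_energy_def by simp
  qed
  have hc: "heat_capacity kB J1 J2 J3 J4 J5 T = kB * (2 * T * g1 T + T^2 * G2)"
  proof -
    have "heat_capacity kB J1 J2 J3 J4 J5 T = deriv (\<lambda>t. kB * t^2 * g1 t) T"
      unfolding heat_capacity_def
      by (rule deriv_cong_ev[OF eventually_mono[OF ev] refl]) (simp add: ie)
    also have "\<dots> = kB * (2 * T * g1 T + T^2 * G2)"
      by (rule DERIV_imp_deriv) (auto intro!: derivative_eq_intros dg1 simp: algebra_simps)
    finally show ?thesis .
  qed
  show ?thesis
    using lim[of T] fe[of T] ie[OF TT] hc derg[OF TT] derg2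
    by (simp add: lm algebra_simps)
qed

end
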